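(* There exist constants $c > 0$ and $n_0$ such that for every $n \ge n_0$ there exists a word $w$ of length $4n^2$ over an alphabet of $n$ symbols such that $TG(w)$ is a temporal path graph on $n$ vertices and every temporal walk in $TG(w)$ that visits all $n$ vertices has length at least $c n^2$ (i.e. exploring $TG(w)$ requires $\Omega(n^2)$ timesteps).
   Context: For a word $w$, $w[i]$ is its $i$-th letter, $w[i,j]$ the factor $w[i]\cdots w[j]$, $\mathrm{letters}(u)$ the set of symbols occurring in $u$, and $\pi_{\mathcal S}(w)$ the subsequence of $w$ of all occurrences of symbols in $\mathcal S$. Symbols $x,y$ alternate in $w$ if $\pi_{\{x,y\}}(w) \in \{(xy)^k, (xy)^kx, (yx)^k, (yx)^ky : k \ge 0\}$. $G(w)$ has one vertex $v_a$ per alphabet symbol $a$ and undirected edge $(v_x,v_y)$ iff $x\neq y$ alternate in $w$. Start points: $S_1=1$, and $S_i$ is the least index $j>S_{i-1}$ with $w[j] \in \mathrm{letters}(w[S_{i-1},j-1])$; $S_1<\dots<S_T$ are all start points. The $t$-th timestep factor is $w[S_t,S_{t+1}-1]$ ($t<T$) or $w[S_T,|w|]$ ($t=T$). $TG(w)=(V,E_1,\dots,E_T)$ with $E_t$ the set of edges $(v_x,v_y)$ of $G(w)$ with $x$ or $y$ occurring in the $t$-th timestep factor. A temporal path graph is such a $TG(w)$ whose underlying graph $(V,\bigcup_t E_t)$ is a path. A temporal walk is a sequence $(e_1,t_1),\dots,(e_k,t_k)$ with $e_i\in E_{t_i}$, the end point of $e_i$ equal to the start point of $e_{i+1}$, and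 $t_1<\dots<t_k$; it visits the endpoints of its edges and has length $t_k$. *)

theory Defs
  imports Complex_Main
begin

(* Words are lists of natural numbers; positions are 0-based internally
   (paper index i corresponds to list index i-1). The alphabet of n symbols
   is {0..<n}; vertex v_a is identified with the symbol a. *)

definition proj :: "nat set \<Rightarrow> nat list \<Rightarrow> nat list" where
  "proj S w = filter (\<lambda>a. a \<in> S) w"

definition alternate :: "nat \<Rightarrow> nat \<Rightarrow> nat list \<Rightarrow> bool" where
  "alternate x y w = (\<exists>k. proj {x, y} w = concat (replicate k [x, y])
                         \<or> proj {x, y} w = concat (replicate k [x, y]) @ [x]
                         \<or> proj {x, y} w = concat (replicate k [y, x])
                         \<or> proj {x, y} w = concat (replicate k [y, x]) @ [y])"

definition Gedges :: "nat \<Rightarrow> nat list \<Rightarrow> nat set set" where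
  "Gedges n w = {{x, y} | x y. x < n \<and> y < n \<and> x \<noteq> y \<and> alternate x y w}"

definition is_next :: "nat list \<Rightarrow> nat \<Rightarrow> nat \<Rightarrow> bool" where
  "is_next w s j = (s < j \<and> j < length w \<and> w ! j \<in> set (take (j - s) (drop s w)))"

inductive_set startpts :: "nat list \<Rightarrow> nat set" for w where
  first: "0 \<in> startpts w"
| step: "s \<in> startpts w \<Longrightarrow> \<exists>j. is_next w s j \<Longrightarrow>
         (LEAST j. is_next w s j) \<in> startpts w"

(* S_1 < ... < S_T, 0-based positions *)
definition starts :: "nat list \<Rightarrow> nat list" where
  "starts w = sorted_list_of_set (startpts w)"

definition numT :: "nat list \<Rightarrow> nat" where
  "numT w = length (starts w)"

(* t-th timestep factor, t \<in> {1..T} *)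
definition factor :: "nat list \<Rightarrow> nat \<Rightarrow> nat list" where
  "factor w t = (if t < numT w
     then take (starts w ! t - starts w ! (t - 1)) (drop (starts w ! (t - 1)) w)
     else drop (starts w ! (numT w - 1)) w)"

definition TEdges :: "nat \<Rightarrow> nat list \<Rightarrow> nat \<Rightarrow> nat set set" where
  "TEdges n w t = {e \<in> Gedges n w. \<exists>a \<in> e. a \<in> set (factor w t)}"

definition is_path_graph :: "nat set \<Rightarrow> nat set set \<Rightarrow> bool" where
  "is_path_graph V E = (\<exists>p. distinct p \<and> set p = V \<and>
       E = {{p ! i, p ! (i + 1)} | i. i + 1 < length p})"

definition temporal_path_graph :: "nat \<Rightarrow> nat list \<Rightarrow> bool" where
  "temporal_path_graph n w =
     is_path_graph {0..<n} (\<Union>t\<in>{1..numT w}. TEdges n w t)"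

(* temporal walk given by its vertex sequence vs = v_0..v_k and times ts = t_1..t_k (k \<ge> 1):
   edge i is {v_(i-1), v_i} \<in> E_(t_i), times strictly increasing *)
definition temporal_walk :: "nat \<Rightarrow> nat list \<Rightarrow> nat list \<Rightarrow> nat list \<Rightarrow> bool" where
  "temporal_walk n w vs ts =
     (ts \<noteq> [] \<and> length vs = length ts + 1 \<and> sorted_wrt (<) ts \<and>
      (\<forall>i < length ts. ts ! i \<in> {1..numT w} \<and> {vs ! i, vs ! (i + 1)} \<in> TEdges n w (ts ! i)))"

end

theory Submission
  imports Defs
begin

definition nx :: "nat list \<Rightarrow> nat \<Rightarrow> nat" where
  "nx w s = (LEAST j. is_next w s j)"

lemma nx: "is_next w s j \<Longrightarrow> is_next w s (nx w s) \<and> nx w s \<le> j"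
  unfolding nx_def by (metis LeastI Least_le)

lemma in_seg: "s \<le> i \<Longrightarrow> i < j \<Longrightarrow> j \<le> length w \<Longrightarrow> w!i \<in> set (take (j-s) (drop s w))"
proof -
  assume a: "s \<le> i" "i < j" "j \<le> length w"
  have "take (j-s) (drop s w) ! (i-s) = w!i" using a by simp
  moreover have "i - s < length (take (j-s) (drop s w))" using a by simp
  ultimately show ?thesis by (metis nth_mem)
qed

lemma seg_in: "a \<in> set (take k (drop s w)) \<Longrightarrow> \<exists>i. s \<le> i \<and> i < s+k \<and> i < length w \<and> w!i = a"
proof -
  assume "a \<in> set (take k (drop s w))"
  then obtain m where m: "m < length (take k (drop s w))" "take k (drop s w) ! m = a"
    by (metis in_set_conv_nth)
  then show ?thesis by (intro exI[of _ "s+m"]) auto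
qed

lemma drop_in: "a \<in> set (drop s w) \<Longrightarrow> \<exists>i. s \<le> i \<and> i < length w \<and> w!i = a"
proof -
  assume "a \<in> set (drop s w)"
  then obtain m where m: "m < length (drop s w)" "drop s w ! m = a"
    by (metis in_set_conv_nth)
  then show ?thesis by (intro exI[of _ "s+m"]) auto
qed

lemma in_drop: "s \<le> i \<Longrightarrow> i < length w \<Longrightarrow> w!i \<in> set (drop s w)"
proof -
  assume a: "s \<le> i" "i < length w"
  have "drop s w ! (i-s) = w!i" using a by simp
  moreover have "i - s < length (drop s w)" using a by simp
  ultimately show ?thesis by (metis nth_mem)
qed

lemma sp_lt: "s \<in> startpts w \<Longrightarrow> w \<noteq> [] \<Longrightarrow> s < length w"
proof (induction rule: startpts.induct)
  case first then show ?case by simp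
next
  case (step s)
  then obtain j where "is_next w s j" by blast
  then have "is_next w s (nx w s)" using nx by blast
  then have "nx w s < length w" unfolding is_next_def by simp
  then show ?case unfolding nx_def .
qed

lemma sp_fin: "finite (startpts w)"
proof (cases "w = []")
  case True
  have "startpts w \<subseteq> {0}"
  proof
    fix s assume "s \<in> startpts w" then show "s \<in> {0}"
      by (induction rule: startpts.induct) (use True in \<open>auto simp: is_next_def\<close>)
  qed
  then show ?thesis by (meson finite.simps finite_subset)
next
  case False
  then have "startpts w \<subseteq> {..<length w}" using sp_lt by blast
  then show ?thesis using finite_subset by blast
qed

lemma sp_step: "s \<in> startpts w \<Longrightarrow> is_next w s j \<Longrightarrow> nx w s \<in> startpts w"
  unfolding nx_def by (rule startpts.step) auto

lemma chain: "s2 \<in> startpts w \<Longrightarrow> s1 \<in> startpts w \<Longrightarrow> s1 < s2 \<Longrightarrow>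
   (\<exists>j. is_next w s1 j) \<and> nx w s1 \<le> s2"
proof (induction s2 arbitrary: s1 rule: less_induct)
  case (less s2)
  from less.prems(1) show ?case
  proof (cases rule: startpts.cases)
    case first then show ?thesis using less.prems by simp
  next
    case (step s3)
    then obtain j where j: "is_next w s3 j" by blast
    have s2: "s2 = nx w s3" using step unfolding nx_def by simp
    have n3: "is_next w s3 (nx w s3)" using nx j by blast
    then have lt: "s3 < s2" using s2 unfolding is_next_def by simp
    consider "s1 = s3" | "s1 < s3" | "s3 < s1" by linarith
    then show ?thesis
    proof cases
      case 1 then show ?thesis using n3 s2 by auto
    next
      case 2
      then show ?thesis using less.IH[OF lt step(2) less.prems(2) 2] lt by auto
    next
      case 3
      have "nx w s3 \<le> s1" using less.IH[OF less.prems(3) less.prems(2) step(2) 3] by blast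
      then show ?thesis using s2 less.prems(3) by simp
    qed
  qed
qed

lemma st_set: "set (starts w) = startpts w" by (simp add: starts_def sp_fin)
lemma st_sorted: "sorted_wrt (<) (starts w)"
  unfolding starts_def using sorted_list_of_set.strict_sorted_key_list_of_set[of "startpts w"] by simp
lemma st_len: "numT w = length (starts w)" by (simp add: numT_def)

lemma st_in: "i < numT w \<Longrightarrow> starts w ! i \<in> startpts w"
  using st_set st_len by (metis nth_mem)
lemma st_mono: "i < j \<Longrightarrow> j < numT w \<Longrightarrow> starts w ! i < starts w ! j"
  using st_sorted st_len sorted_wrt_nth_less by metis
lemma st_mono_le: "i \<le> j \<Longrightarrow> j < numT w \<Longrightarrow> starts w ! i \<le> starts w ! j"
  using st_mono by (metis le_eq_less_or_eq order.strict_implies_order)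
lemma st_idx: "x \<in> startpts w \<Longrightarrow> \<exists>i<numT w. starts w ! i = x"
  using st_set st_len by (metis in_set_conv_nth)

lemma st0: "0 < numT w \<and> starts w ! 0 = 0"
proof -
  obtain i where i: "i < numT w" "starts w ! i = 0" using st_idx startpts.first by blast
  have "i = 0"
  proof (rule ccontr)
    assume "i \<noteq> 0"
    then have "starts w ! 0 < starts w ! i" using st_mono[of 0 i w] i by simp
    then show False using i by simp
  qed
  then show ?thesis using i by simp
qed

lemma st_succ: assumes "1 \<le> t" "t < numT w"
  shows "(\<exists>j. is_next w (starts w ! (t-1)) j) \<and> starts w ! t = nx w (starts w ! (t-1))"
proof -
  let ?s = "starts w ! (t-1)"
  have lt: "?s < starts w ! t" using st_mono assms by simp
  have c: "(\<exists>j. is_next w ?s j) \<and> nx w ?s \<le> starts w ! t"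
  proof -
    have a: "t - 1 < numT w" using assms by simp
    show ?thesis using chain[OF st_in[OF assms(2)] st_in[OF a] lt] .
  qed
  then obtain j where j: "is_next w ?s j" by blast
  have n: "is_next w ?s (nx w ?s)" using nx j by blast
  have inn: "nx w ?s \<in> startpts w" using sp_step st_in j assms by (metis less_imp_diff_less)
  obtain m where m: "m < numT w" "starts w ! m = nx w ?s" using st_idx inn by blast
  have "?s < starts w ! m" using n m unfolding is_next_def by simp
  then have "\<not> m \<le> t - 1" using st_mono_le m assms by (metis leD less_imp_diff_less)
  then have "t \<le> m" by simp
  then have "starts w ! t \<le> starts w ! m" using st_mono_le m by blast
  then show ?thesis using c m by simp
qed

lemma st_last: "\<not> (\<exists>j. is_next w (starts w ! (numT w - 1)) j)"
proof
  let ?s = "starts w ! (numT w - 1)"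
  assume "\<exists>j. is_next w ?s j"
  then obtain j where j: "is_next w ?s j" by blast
  have n: "is_next w ?s (nx w ?s)" using nx j by blast
  have T: "0 < numT w" using st0 by blast
  have inn: "nx w ?s \<in> startpts w" using sp_step st_in j T by (metis diff_less zero_less_one)
  obtain m where m: "m < numT w" "starts w ! m = nx w ?s" using st_idx inn by blast
  have "?s < starts w ! m" using n m unfolding is_next_def by simp
  moreover have "starts w ! m \<le> ?s" using st_mono_le[of m "numT w - 1" w] m(1) T by simp
  ultimately show False by simp
qed

definition win4 :: "nat list \<Rightarrow> bool" where
  "win4 w = (\<forall>p. p+4 < length w \<longrightarrow> (\<exists>i j. p \<le> i \<and> i < j \<and> j \<le> p+4 \<and> w!i = w!j))"

definition locp :: "nat list \<Rightarrow> bool" where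
  "locp w = ((\<forall>s. s+1 < length w \<longrightarrow> w!(s+1) \<noteq> w!s) \<and>
     (\<forall>s i. s+2 < length w \<longrightarrow> i < s \<longrightarrow> s \<le> i+4 \<longrightarrow> w!i = w!s \<longrightarrow> w!(s+2) \<noteq> w!s))"

lemma win_next: assumes "win4 w" "s + 4 < length w" shows "\<exists>j. is_next w s j \<and> j \<le> s+4"
proof -
  obtain i j where ij: "s \<le> i" "i < j" "j \<le> s+4" "w!i = w!j" using assms unfolding win4_def by blast
  have "w!j \<in> set (take (j-s) (drop s w))" using in_seg[of s i j w] ij assms by simp
  then have "is_next w s j" unfolding is_next_def using ij assms by simp
  then show ?thesis using ij by blast
qed

lemma next_le4: assumes "win4 w" "is_next w s j" shows "nx w s \<le> s+4"
proof (cases "s + 4 < length w")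
  case True
  then obtain j' where "is_next w s j'" "j' \<le> s+4" using win_next assms by blast
  then show ?thesis using nx by fastforce
next
  case False
  have "is_next w s (nx w s)" using nx assms by blast
  then show ?thesis using False unfolding is_next_def by simp
qed

lemma len_upper: assumes "win4 w" "1 \<le> t" "t < numT w"
  shows "starts w ! t \<le> starts w ! (t-1) + 4"
  using st_succ[OF assms(2,3)] next_le4[OF assms(1)] by metis

lemma last_upper: assumes "win4 w" shows "length w \<le> starts w ! (numT w - 1) + 4"
  using win_next[OF assms] st_last by (meson not_le)

lemma len_lower: assumes "win4 w" "locp w" "2 \<le> t" "t < numT w"
  shows "starts w ! (t-1) + 3 \<le> starts w ! t"
proof -
  let ?s = "starts w ! (t-1)"
  have sp: "?s \<in> startpts w" using st_in assms by simp
  have pos: "0 < ?s" using st_mono[of 0 "t-1" w] st0 assms by simp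
  from sp have cr: "\<exists>i. i < ?s \<and> ?s \<le> i + 4 \<and> w!i = w!?s"
  proof (cases rule: startpts.cases)
    case first then show ?thesis using pos by simp
  next
    case (step s0)
    then obtain j where j: "is_next w s0 j" by blast
    have e: "?s = nx w s0" using step unfolding nx_def by simp
    have n: "is_next w s0 ?s" using nx j e by metis
    have le: "?s \<le> s0 + 4" using next_le4[OF assms(1) j] e by simp
    obtain i where i: "s0 \<le> i" "i < s0 + (?s - s0)" "w!i = w!?s"
      using seg_in n unfolding is_next_def by metis
    then show ?thesis using le by (intro exI[of _ i]) auto
  qed
  have t1: "1 \<le> t" using assms by simp
  obtain j where j: "is_next w ?s j" using st_succ[OF t1 assms(4)] by blast
  have e: "starts w ! t = nx w ?s" using st_succ[OF t1 assms(4)] by blast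
  have n: "is_next w ?s (starts w ! t)" using nx j e by metis
  obtain i' where i': "?s \<le> i'" "i' < ?s + (starts w ! t - ?s)" "w!i' = w!(starts w ! t)"
    using seg_in n unfolding is_next_def by metis
  have L: "starts w ! t < length w" using n unfolding is_next_def by simp
  have a1: "\<And>s. s+1 < length w \<Longrightarrow> w!(s+1) \<noteq> w!s" using assms(2) unfolding locp_def by blast
  have a2: "\<And>s i. s+2 < length w \<Longrightarrow> i < s \<Longrightarrow> s \<le> i+4 \<Longrightarrow> w!i = w!s \<Longrightarrow> w!(s+2) \<noteq> w!s"
    using assms(2) unfolding locp_def by blast
  show ?thesis
  proof (rule ccontr)
    assume "\<not> ?thesis"
    then consider "starts w ! t = ?s + 1" | "starts w ! t = ?s + 2"
      using n unfolding is_next_def by linarith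
    then show False
    proof cases
      case 1
      then have "i' = ?s" using i' by simp
      then show False using a1[of ?s] i' 1 L by simp
    next
      case 2
      then consider "i' = ?s" | "i' = ?s + 1" using i' by linarith
      then show False
      proof cases
        case 1 then show False using a2[of ?s] cr i' 2 L by auto
      next
        case 3: 2
        then show False using a1[of "?s+1"] i' 2 L by simp
      qed
    qed
  qed
qed

definition lo :: "nat list \<Rightarrow> nat \<Rightarrow> nat" where "lo w t = starts w ! (t-1)"
definition hi :: "nat list \<Rightarrow> nat \<Rightarrow> nat" where
  "hi w t = (if t < numT w then starts w ! t else length w)"

lemma st_lt_len: "t < numT w \<Longrightarrow> 1 \<le> t \<Longrightarrow> starts w ! t < length w"
  using st_succ nx unfolding is_next_def by metis

lemma fac_mem: assumes "1 \<le> t" "t \<le> numT w"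
  shows "a \<in> set (factor w t) \<longleftrightarrow> (\<exists>p. lo w t \<le> p \<and> p < hi w t \<and> p < length w \<and> w!p = a)"
proof (cases "t < numT w")
  case True
  have f: "factor w t = take (starts w ! t - starts w ! (t-1)) (drop (starts w ! (t-1)) w)"
    using True unfolding factor_def by simp
  have lt: "starts w ! (t-1) < starts w ! t" using st_mono True assms by simp
  have L: "starts w ! t < length w" using st_lt_len True assms by simp
  show ?thesis
  proof
    assume "a \<in> set (factor w t)"
    then show "\<exists>p. lo w t \<le> p \<and> p < hi w t \<and> p < length w \<and> w!p = a"
      using seg_in[of a] f lt True unfolding lo_def hi_def by fastforce
  next
    assume "\<exists>p. lo w t \<le> p \<and> p < hi w t \<and> p < length w \<and> w!p = a"
    then obtain p where "lo w t \<le> p" "p < hi w t" "w!p = a" by blast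
    then show "a \<in> set (factor w t)" using in_seg[of "starts w ! (t-1)" p "starts w ! t" w] f L True
      unfolding lo_def hi_def by auto
  qed
next
  case False
  then have tt: "t = numT w" using assms by simp
  have f: "factor w t = drop (starts w ! (t-1)) w" using tt unfolding factor_def by simp
  show ?thesis
  proof
    assume "a \<in> set (factor w t)"
    then show "\<exists>p. lo w t \<le> p \<and> p < hi w t \<and> p < length w \<and> w!p = a"
      using drop_in[of a] f tt unfolding lo_def hi_def by fastforce
  next
    assume "\<exists>p. lo w t \<le> p \<and> p < hi w t \<and> p < length w \<and> w!p = a"
    then obtain p where "lo w t \<le> p" "p < length w" "w!p = a" by blast
    then show "a \<in> set (factor w t)" using in_drop f unfolding lo_def by metis
  qed
qed

lemma hi_lo4: assumes "win4 w" "1 \<le> t" "t \<le> numT w" shows "hi w t \<le> lo w t + 4"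
proof (cases "t < numT w")
  case True then show ?thesis using len_upper[OF assms(1,2)] unfolding hi_def lo_def by simp
next
  case False then have "t = numT w" using assms by simp
  then show ?thesis using last_upper[OF assms(1)] unfolding hi_def lo_def by simp
qed

lemma hi_le: assumes "win4 w" shows "1 \<le> t \<Longrightarrow> t \<le> numT w \<Longrightarrow> hi w t \<le> 4*t"
proof (induction t)
  case 0 then show ?case by simp
next
  case (Suc t)
  show ?case
  proof (cases "t = 0")
    case True
    then show ?thesis using hi_lo4[OF assms, of 1] Suc.prems st0 unfolding lo_def by simp
  next
    case False
    have "hi w t \<le> 4*t" using Suc False by simp
    moreover have "hi w t = lo w (Suc t)" using Suc.prems unfolding hi_def lo_def by simp
    moreover have "hi w (Suc t) \<le> lo w (Suc t) + 4" using hi_lo4[OF assms] Suc.prems by simp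
    ultimately show ?thesis by simp
  qed
qed

lemma gap0: assumes "win4 w" "locp w" "1 \<le> a"
  shows "a + d < numT w \<Longrightarrow> starts w ! a + 3*d \<le> starts w ! (a+d)"
proof (induction d)
  case 0 then show ?case by simp
next
  case (Suc d)
  have "starts w ! (a + d) + 3 \<le> starts w ! (a + Suc d)"
    using len_lower[OF assms(1,2), of "a + Suc d"] Suc.prems assms(3) by simp
  then show ?case using Suc by simp
qed

lemma gap: assumes "win4 w" "locp w" "1 \<le> t" "t < t'" "t' \<le> numT w"
  shows "hi w t + 3*(t'-t-1) \<le> lo w t'"
proof -
  have "starts w ! t + 3*(t'-1-t) \<le> starts w ! (t + (t'-1-t))"
    using gap0[OF assms(1,2,3), of "t'-1-t"] assms by simp
  then show ?thesis using assms unfolding hi_def lo_def by simp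
qed

lemma pos_fac: assumes "p < length w" shows "\<exists>t. 1 \<le> t \<and> t \<le> numT w \<and> lo w t \<le> p \<and> p < hi w t"
proof -
  let ?A = "{i. i < numT w \<and> starts w ! i \<le> p}"
  have fin: "finite ?A" by simp
  have ne: "0 \<in> ?A" using st0 by simp
  let ?i = "Max ?A"
  have iA: "?i \<in> ?A" using fin ne Max_in by blast
  have mx: "\<And>j. j \<in> ?A \<Longrightarrow> j \<le> ?i" using fin by simp
  show ?thesis
  proof (intro exI[of _ "?i+1"] conjI)
    show "lo w (?i + 1) \<le> p" using iA unfolding lo_def by simp
    show "p < hi w (?i + 1)"
    proof (cases "?i + 1 < numT w")
      case True
      have "?i + 1 \<notin> ?A" using mx by fastforce
      then show ?thesis using True unfolding hi_def by simp
    next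
      case False then show ?thesis using assms unfolding hi_def by simp
    qed
  qed (use iA in auto)
qed

definition g :: "nat \<Rightarrow> nat \<Rightarrow> nat" where
  "g n q = (if q = 0 then 0 else if q = 2*n-1 then n-1 else if odd q then (q+1) div 2 else (q-2) div 2)"
definition oa :: "nat \<Rightarrow> nat \<Rightarrow> nat" where
  "oa n x = (if x = 0 then 0 else if x = n-1 then 2*n-3 else 2*x-1)"
definition ob :: "nat \<Rightarrow> nat \<Rightarrow> nat" where
  "ob n x = (if x = 0 then 2 else if x = n-1 then 2*n-1 else 2*x+2)"

lemma g0: "g n 0 = 0" by (simp add: g_def)
lemma g_odd: "1 \<le> n \<Longrightarrow> m + 1 < n \<Longrightarrow> g n (2*m+1) = m+1" by (simp add: g_def)
lemma g_last: "1 \<le> n \<Longrightarrow> g n (2*n-1) = n-1" by (simp add: g_def)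
lemma g_even: "1 \<le> n \<Longrightarrow> g n (2*m+2) = m" 
proof -
  assume "1 \<le> n"
  have "2*m+2 \<noteq> 2*n-1" by presburger
  then show ?thesis by (simp add: g_def)
qed

lemma qcases: "(q::nat) < 2*n \<Longrightarrow> 1 \<le> n \<Longrightarrow> (q = 0 \<Longrightarrow> P) \<Longrightarrow> (q = 2*n-1 \<Longrightarrow> P) \<Longrightarrow>
   (\<And>m. q = 2*m+1 \<Longrightarrow> m+1 < n \<Longrightarrow> P) \<Longrightarrow> (\<And>m. q = 2*m+2 \<Longrightarrow> m+1 < n \<Longrightarrow> P) \<Longrightarrow> P"
proof -
  assume a: "q < 2*n" "1 \<le> n" "q = 0 \<Longrightarrow> P" "q = 2*n-1 \<Longrightarrow> P"
     "\<And>m. q = 2*m+1 \<Longrightarrow> m+1 < n \<Longrightarrow> P" "\<And>m. q = 2*m+2 \<Longrightarrow> m+1 < n \<Longrightarrow> P"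
  show P
  proof (cases "odd q")
    case True
    then obtain m where m: "q = 2*m+1" by (metis oddE)
    show P proof (cases "m+1 < n")
      case True then show P using a(5) m by blast
    next
      case False then have "q = 2*n-1" using m a(1) by simp
      then show P using a(4) by blast
    qed
  next
    case False
    then obtain k where k: "q = 2*k" by (metis evenE)
    show P proof (cases k)
      case 0 then show P using a(3) k by simp
    next
      case (Suc m) then show P using a(6)[of m] k a(1) by simp
    qed
  qed
qed

lemma occ: assumes "4 \<le> n" "q < 2*n" "x < n"
  shows "g n q = x \<longleftrightarrow> q = oa n x \<or> q = ob n x"
proof (rule qcases[of q n])
  assume "q = 0" then show ?thesis using assms by (auto simp: g0 oa_def ob_def)
next
  assume q: "q = 2*n-1" then show ?thesis using assms g_last[of n] by (auto simp: oa_def ob_def)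
next
  fix m assume q: "q = 2*m+1" "m+1 < n" then show ?thesis using assms g_odd[of n m] by (auto simp: oa_def ob_def; presburger)
next
  fix m assume q: "q = 2*m+2" "m+1 < n"
  have "g n q = m" using q g_even[of n m] assms by simp
  consider "x = 0" | "x \<noteq> 0" "x = n-1" | "x \<noteq> 0" "x \<noteq> n-1" by blast
  then show ?thesis
  proof cases
    case 1 then show ?thesis using \<open>g n q = m\<close> q unfolding oa_def ob_def by auto
  next
    case 2
    have "2*m+2 \<noteq> 2*n-3" "2*m+2 \<noteq> 2*n-1" using assms(1) by presburger+
    then show ?thesis using 2 \<open>g n q = m\<close> q unfolding oa_def ob_def by auto
  next
    case 3
    have "2*m+2 \<noteq> 2*x-1" using 3 by presburger
    then show ?thesis using 3 \<open>g n q = m\<close> q unfolding oa_def ob_def by auto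
  qed
qed (use assms in auto)

lemma g_lt: assumes "4 \<le> n" "q < 2*n" shows "g n q < n"
proof (rule qcases[of q n])
  fix m assume q: "q = 2*m+1" "m+1 < n" then show ?thesis using assms g_odd[of n m] by auto
next
  fix m assume q: "q = 2*m+2" "m+1 < n" then show ?thesis using assms g_even[of n m] by auto
qed (use assms g0 g_last in auto)

lemma oab: "4 \<le> n \<Longrightarrow> x < n \<Longrightarrow> oa n x < ob n x \<and> ob n x < 2*n \<and> ob n x \<le> 2*x+2 \<and> 2*x \<le> oa n x + 1"
  unfolding oa_def ob_def by (simp split: if_split) arith

lemma g_oa: "4 \<le> n \<Longrightarrow> x < n \<Longrightarrow> g n (oa n x) = x" using occ oab by (metis order.strict_trans)
lemma g_ob: "4 \<le> n \<Longrightarrow> x < n \<Longrightarrow> g n (ob n x) = x" using occ oab by metis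

lemma posb: assumes "4 \<le> n" "q < 2*n" "v+1 < n" "g n q = v \<or> g n q = v+1"
  shows "2*v \<le> q+1 \<and> q \<le> 2*v+4"
proof -
  have "q = oa n v \<or> q = ob n v \<or> q = oa n (v+1) \<or> q = ob n (v+1)"
    using occ[OF assms(1,2)] assms(3,4) by auto
  then show ?thesis using oab[OF assms(1), of v] oab[OF assms(1), of "v+1"] assms(3)
    by (auto simp: oa_def ob_def split: if_split_asm)
qed

definition H :: "nat \<Rightarrow> nat \<Rightarrow> nat" where "H n p = g n (p mod (2*n))"
definition wd :: "nat \<Rightarrow> nat list" where "wd n = map (H n) [0..<4*n^2]"

lemma wd_len: "length (wd n) = 4*n^2" by (simp add: wd_def)
lemma wd_nth: "p < 4*n^2 \<Longrightarrow> wd n ! p = H n p" by (simp add: wd_def)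

lemma Hm: "c < 2*n \<Longrightarrow> H n (2*n*a + c) = g n c"
  unfolding H_def by (metis mod_less mod_mult_self3 mult.commute)

lemma decomp: "0 < (n::nat) \<Longrightarrow> (p::nat) = 2*n*(p div (2*n)) + p mod (2*n) \<and> p mod (2*n) < 2*n"
  by simp

lemma Hat: "p = 2*n*a + c \<Longrightarrow> c < 2*n \<Longrightarrow> H n p = g n c" using Hm by simp
lemma He: "p = 2*n*a + c \<Longrightarrow> c < 2*n \<Longrightarrow> c = 2*m+2 \<Longrightarrow> 1 \<le> n \<Longrightarrow> H n p = m"
  using Hat[of p n a c] g_even[of n m] by simp
lemma Ho: "p = 2*n*a + c \<Longrightarrow> c < 2*n \<Longrightarrow> c = 2*m+1 \<Longrightarrow> m+1 < n \<Longrightarrow> H n p = m+1"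
  using Hat[of p n a c] g_odd[of n m] by simp
lemma Hl: "p = 2*n*a + c \<Longrightarrow> c = 2*n-1 \<Longrightarrow> 1 \<le> n \<Longrightarrow> H n p = n-1"
  using Hat[of p n a c] g_last[of n] by simp
lemma Hz: "p = 2*n*a \<Longrightarrow> 1 \<le> n \<Longrightarrow> H n p = 0"
  using Hat[of p n a 0] g0 by simp

lemma H_lt: "4 \<le> n \<Longrightarrow> H n p < n" unfolding H_def using g_lt by simp

lemma H_win: assumes n: "4 \<le> n"
  shows "\<exists>i j. p \<le> i \<and> i < j \<and> j \<le> p+4 \<and> H n i = H n j"
proof -
  define a where "a = p div (2*n)"
  define q where "q = p mod (2*n)"
  have pq: "p = 2*n*a + q" "q < 2*n" using decomp[of n p] n unfolding a_def q_def by auto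
  have n1: "1 \<le> n" using n by simp
  have nx: "2*n*(a+1) = 2*n*a + 2*n" by (simp add: algebra_simps)
  show ?thesis
  proof (rule qcases[OF pq(2) n1])
    assume q: "q = 0"
    have "H n p = 0" by (rule Hz[of _ n a]) (use pq q n in auto)
    moreover have "H n (p+2) = 0" by (rule He[of _ n a 2]) (use pq q n in auto)
    ultimately show ?thesis by (intro exI[of _ p] exI[of _ "p+2"]) auto
  next
    assume q: "q = 2*n-1"
    have "H n (p+1) = 0" by (rule Hz[of _ n "a+1"]) (use pq q n nx in auto)
    moreover have "H n (p+3) = 0" by (rule He[of _ n "a+1" 2]) (use pq q n nx in auto)
    ultimately show ?thesis by (intro exI[of _ "p+1"] exI[of _ "p+3"]) auto
  next
    fix m assume q: "q = 2*m+1" "m+1 < n"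
    show ?thesis
    proof (cases "m+2 < n")
      case True
      have "H n p = m+1" by (rule Ho[of _ n a q]) (use pq q True in auto)
      moreover have "H n (p+3) = m+1" by (rule He[of _ n a "q+3"]) (use pq q True in auto)
      ultimately show ?thesis by (intro exI[of _ p] exI[of _ "p+3"]) auto
    next
      case False
      then have mm: "m+2 = n" using q by simp
      have "H n p = m+1" by (rule Ho[of _ n a q]) (use pq q in auto)
      moreover have "H n (p+2) = n-1" by (rule Hl[of _ n a "q+2"]) (use pq q mm in auto)
      ultimately show ?thesis using mm by (intro exI[of _ p] exI[of _ "p+2"]) auto
    qed
  next
    fix m assume q: "q = 2*m+2" "m+1 < n"
    consider "m+3 < n" | "m+3 = n" | "m+2 = n" using q by linarith
    then show ?thesis
    proof cases
      case 1
      have "H n (p+1) = (m+1)+1" by (rule Ho[of _ n a "q+1"]) (use pq q 1 in auto)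
      moreover have "H n (p+4) = m+2" by (rule He[of _ n a "q+4"]) (use pq q 1 in auto)
      ultimately show ?thesis by (intro exI[of _ "p+1"] exI[of _ "p+4"]) auto
    next
      case 2
      have "H n (p+1) = (m+1)+1" by (rule Ho[of _ n a "q+1"]) (use pq q 2 in auto)
      moreover have "H n (p+3) = n-1" by (rule Hl[of _ n a "q+3"]) (use pq q 2 in auto)
      ultimately show ?thesis using 2 by (intro exI[of _ "p+1"] exI[of _ "p+3"]) auto
    next
      case 3
      have "H n (p+2) = 0" by (rule Hz[of _ n "a+1"]) (use pq q n nx 3 in auto)
      moreover have "H n (p+4) = 0" by (rule He[of _ n "a+1" 2]) (use pq q n nx 3 in auto)
      ultimately show ?thesis by (intro exI[of _ "p+2"] exI[of _ "p+4"]) auto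
    qed
  qed
qed

lemma H_adj: assumes n: "4 \<le> n" shows "H n (s+1) \<noteq> H n s"
proof -
  define a where "a = s div (2*n)"
  define q where "q = s mod (2*n)"
  have pq: "s = 2*n*a + q" "q < 2*n" using decomp[of n s] n unfolding a_def q_def by auto
  have n1: "1 \<le> n" using n by simp
  have nx: "2*n*(a+1) = 2*n*a + 2*n" by (simp add: algebra_simps)
  show ?thesis
  proof (rule qcases[OF pq(2) n1])
    assume q: "q = 0"
    have "H n s = 0" by (rule Hz[of _ n a]) (use pq q n in auto)
    moreover have "H n (s+1) = 0+1" by (rule Ho[of _ n a 1]) (use pq q n in auto)
    ultimately show ?thesis by simp
  next
    assume q: "q = 2*n-1"
    have "H n s = n-1" by (rule Hl[of _ n a q]) (use pq q n in auto)
    moreover have "H n (s+1) = 0" by (rule Hz[of _ n "a+1"]) (use pq q n nx in auto)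
    ultimately show ?thesis using n by simp
  next
    fix m assume q: "q = 2*m+1" "m+1 < n"
    have "H n s = m+1" by (rule Ho[of _ n a q]) (use pq q in auto)
    moreover have "H n (s+1) = m" by (rule He[of _ n a "q+1"]) (use pq q in auto)
    ultimately show ?thesis by simp
  next
    fix m assume q: "q = 2*m+2" "m+1 < n"
    have "H n s = m" by (rule He[of _ n a q]) (use pq q in auto)
    moreover have "H n (s+1) = m+1+1 \<or> H n (s+1) = n-1"
    proof (cases "m+2 < n")
      case True
      have "H n (s+1) = m+1+1" by (rule Ho[of _ n a "q+1"]) (use pq q True in auto)
      then show ?thesis by simp
    next
      case False
      have "H n (s+1) = n-1" by (rule Hl[of _ n a "q+1"]) (use pq q False in auto)
      then show ?thesis by simp
    qed
    ultimately show ?thesis using q by auto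
  qed
qed

lemma H_loc: assumes n: "4 \<le> n" and i: "i < s" "s \<le> i+4" "H n i = H n s"
  shows "H n (s+2) \<noteq> H n s"
proof -
  define a where "a = s div (2*n)"
  define q where "q = s mod (2*n)"
  have pq: "s = 2*n*a + q" "q < 2*n" using decomp[of n s] n unfolding a_def q_def by auto
  have n1: "1 \<le> n" using n by simp
  have nx: "2*n*(a+1) = 2*n*a + 2*n" by (simp add: algebra_simps)
  have dc: "i = s-1 \<or> i = s-2 \<or> i = s-3 \<or> i = s-4" using i by linarith
  show ?thesis
  proof (rule qcases[OF pq(2) n1])
    assume q: "q = 0"
    have hs: "H n s = 0" by (rule Hz[of _ n a]) (use pq q n in auto)
    show ?thesis
    proof (cases a)
      case 0 then show ?thesis using pq q i by simp
    next
      case (Suc b)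
      have sb: "s = 2*n*b + 2*n" using pq q Suc by (simp add: algebra_simps)
      have "H n i \<noteq> 0"
      proof -
        have "H n i = n-1 \<or> H n i = (n-2)+1 \<or> H n i = n-2 \<or> H n i = n-3"
        proof -
          { assume "i = s-1" then have "H n i = n-1" by (intro Hl[of _ n b "2*n-1"]) (use sb n in auto) }
          moreover
          { assume "i = s-2" then have "H n i = n-2" by (intro He[of _ n b "2*n-2"]) (use sb n in auto) }
          moreover
          { assume "i = s-3" then have "H n i = (n-2)+1" by (intro Ho[of _ n b "2*n-3"]) (use sb n in auto) }
          moreover
          { assume "i = s-4" then have "H n i = n-3" by (intro He[of _ n b "2*n-4"]) (use sb n in auto) }
          ultimately show ?thesis using dc by blast
        qed
        then show ?thesis using n by auto
      qed
      then show ?thesis using hs i by simp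
    qed
  next
    assume q: "q = 2*n-1"
    have "H n s = n-1" by (rule Hl[of _ n a q]) (use pq q n in auto)
    moreover have "H n (s+2) = 0+1" by (rule Ho[of _ n "a+1" 1]) (use pq q n nx in auto)
    ultimately show ?thesis using n by simp
  next
    fix m assume q: "q = 2*m+1" "m+1 < n"
    have hs: "H n s = m+1" by (rule Ho[of _ n a q]) (use pq q in auto)
    show ?thesis
    proof (cases "m+2 < n")
      case True
      have "H n (s+2) = (m+1)+1" by (rule Ho[of _ n a "q+2"]) (use pq q True in auto)
      then show ?thesis using hs by simp
    next
      case False
      then have mm: "m = n-2" using q by simp
      have "H n i = n-3 \<or> H n i = (n-3)+1 \<or> H n i = n-4"
      proof -
        { assume "i = s-1" then have "H n i = n-3" by (intro He[of _ n a "2*n-4"]) (use pq q mm n in auto) }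
        moreover
        { assume "i = s-2" then have "H n i = (n-3)+1" by (intro Ho[of _ n a "2*n-5"]) (use pq q mm n in auto) }
        moreover
        { assume "i = s-3" then have "H n i = n-4" by (intro He[of _ n a "2*n-6"]) (use pq q mm n in auto) }
        moreover
        { assume "i = s-4" then have "H n i = (n-4)+1" by (intro Ho[of _ n a "2*n-7"]) (use pq q mm n in auto) }
        ultimately show ?thesis using dc n by fastforce
      qed
      then have "H n i \<noteq> H n s" using hs mm n by auto
      then show ?thesis using i by simp
    qed
  next
    fix m assume q: "q = 2*m+2" "m+1 < n"
    have hs: "H n s = m" by (rule He[of _ n a q]) (use pq q in auto)
    show ?thesis
    proof (cases "m+2 < n")
      case True
      have "H n (s+2) = m+1" by (rule He[of _ n a "q+2"]) (use pq q True in auto)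
      then show ?thesis using hs by simp
    next
      case False
      have "H n (s+2) = 0" by (rule Hz[of _ n "a+1"]) (use pq q False nx in auto)
      then show ?thesis using hs q False n by simp
    qed
  qed
qed

lemma wd_win: "4 \<le> n \<Longrightarrow> win4 (wd n)"
  unfolding win4_def wd_len
proof (intro allI impI)
  fix p assume n: "4 \<le> n" and p: "p + 4 < 4*n^2"
  obtain i j where ij: "p \<le> i" "i < j" "j \<le> p+4" "H n i = H n j" using H_win[OF n] by blast
  then show "\<exists>i j. p \<le> i \<and> i < j \<and> j \<le> p + 4 \<and> wd n ! i = wd n ! j"
    using p wd_nth by (intro exI[of _ i] exI[of _ j]) auto
qed

lemma wd_loc: assumes n: "4 \<le> n" shows "locp (wd n)"
  unfolding locp_def wd_len
proof (intro conjI allI impI)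
  fix s assume s: "s + 1 < 4*n^2"
  then show "wd n ! (s+1) \<noteq> wd n ! s" using wd_nth[of "s+1" n] wd_nth[of s n] H_adj[OF n, of s] by simp
next
  fix s i assume s: "s + 2 < 4*n^2" "i < s" "s \<le> i + 4" "wd n ! i = wd n ! s"
  have "H n i = H n s" using s wd_nth[of i n] wd_nth[of s n] by simp
  then show "wd n ! (s+2) \<noteq> wd n ! s" using wd_nth[of "s+2" n] wd_nth[of s n] H_loc[OF n s(2,3)] s by simp
qed

lemma concat_rep_snoc: "concat (replicate (Suc m) xs) = concat (replicate m xs) @ xs"
  by (induction m) auto

lemma map_period: "0 < N \<Longrightarrow> map (\<lambda>p. G (p mod N)) [0..<m*N] = concat (replicate m (map G [0..<N]))"
proof (induction m)
  case 0 then show ?case by simp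
next
  case (Suc m)
  have u: "[0..<Suc m * N] = [0..<m*N] @ [m*N..<m*N+N]"
  proof -
    have "Suc m * N = m*N + N" by simp
    then show ?thesis using upt_add_eq_append[of 0 "m*N" N] by (metis le0)
  qed
  have v: "[m*N..<m*N+N] = map (\<lambda>i. i + m*N) [0..<N]"
    using map_add_upt[of "m*N" N] by (metis add.commute)
  have w: "map (\<lambda>p. G (p mod N)) (map (\<lambda>i. i + m*N) [0..<N]) = map G [0..<N]"
    by (auto intro!: map_cong)
  have "map (\<lambda>p. G (p mod N)) [0..<Suc m * N] = concat (replicate m (map G [0..<N])) @ map G [0..<N]"
    unfolding u v using Suc w by (simp del: map_map)
  then show ?case by (simp only: concat_rep_snoc)
qed

lemma wd_period: "0 < n \<Longrightarrow> wd n = concat (replicate (2*n) (map (g n) [0..<2*n]))"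
proof -
  assume n: "0 < n"
  have "4*n^2 = (2*n)*(2*n)" by (simp add: power2_eq_square)
  then show ?thesis unfolding wd_def H_def using map_period[of "2*n" "g n" "2*n"] n by simp
qed

lemma proj_wd: "0 < n \<Longrightarrow> proj S (wd n) = concat (replicate (2*n) (map (g n) (filter (\<lambda>q. g n q \<in> S) [0..<2*n])))"
  unfolding proj_def by (simp add: wd_period filter_concat filter_map comp_def)

lemma filt: assumes "sorted_wrt (<) cs" "set cs = {q. q < 2*n \<and> g n q \<in> S}"
  shows "filter (\<lambda>q. g n q \<in> S) [0..<2*n] = cs"
proof (rule sorted_distinct_set_unique)
  show "sorted cs" "distinct cs" using assms(1) strict_sorted_iff by blast+
  show "sorted (filter (\<lambda>q. g n q \<in> S) [0..<2*n])" using sorted_wrt_filter sorted_upt by blast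
  show "distinct (filter (\<lambda>q. g n q \<in> S) [0..<2*n])" by simp
  show "set (filter (\<lambda>q. g n q \<in> S) [0..<2*n]) = set cs" using assms(2) by auto
qed

lemma occ_set: assumes "4 \<le> n" "x < n" "y < n"
  shows "{q. q < 2*n \<and> g n q \<in> {x,y}} = {oa n x, ob n x, oa n y, ob n y}"
  using occ[OF assms(1) _ assms(2)] occ[OF assms(1) _ assms(3)] oab[OF assms(1) assms(2)] oab[OF assms(1) assms(3)]
  by auto

lemma adj_order: assumes "4 \<le> n" "v+1 < n"
  shows "oa n v < oa n (v+1) \<and> oa n (v+1) < ob n v \<and> ob n v < ob n (v+1)"
  using assms unfolding oa_def ob_def by (simp split: if_split) arith

lemma proj_adj: assumes "4 \<le> n" "v+1 < n"
  shows "proj {v, v+1} (wd n) = concat (replicate (2*n) [v, v+1, v, v+1])"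
proof -
  have f: "filter (\<lambda>q. g n q \<in> {v, v+1}) [0..<2*n] = [oa n v, oa n (v+1), ob n v, ob n (v+1)]"
    by (rule filt) (use adj_order[OF assms] occ_set[OF assms(1), of v "v+1"] assms in auto)
  have m: "map (g n) [oa n v, oa n (v+1), ob n v, ob n (v+1)] = [v, v+1, v, v+1]"
    using g_oa g_ob assms by simp
  show ?thesis using proj_wd[of n "{v, v+1}"] f m assms by simp
qed

lemma proj_far: assumes "4 \<le> n" "x+2 \<le> y" "y < n"
  shows "proj {x, y} (wd n) = concat (replicate (2*n) [x, x, y, y])"
proof -
  have o: "ob n x < oa n y" using oab[OF assms(1), of x] oab[OF assms(1), of y] assms by simp
  have f: "filter (\<lambda>q. g n q \<in> {x, y}) [0..<2*n] = [oa n x, ob n x, oa n y, ob n y]"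
    by (rule filt) (use o oab[OF assms(1), of x] oab[OF assms(1), of y] occ_set[OF assms(1), of x y] assms in auto)
  have m: "map (g n) [oa n x, ob n x, oa n y, ob n y] = [x, x, y, y]"
    using g_oa g_ob assms by simp
  show ?thesis using proj_wd[of n "{x, y}"] f m assms by simp
qed

lemma rep_double: "concat (replicate m [a,b,a,b]) = concat (replicate (2*m) [a,b])"
  by (induction m) auto

lemma alt_adj: "4 \<le> n \<Longrightarrow> v+1 < n \<Longrightarrow> alternate v (v+1) (wd n)"
  unfolding alternate_def using proj_adj rep_double by metis

lemma not_alt_form: "a \<noteq> b \<Longrightarrow> concat (replicate k [a,b]) \<noteq> c # c # r \<and> concat (replicate k [a,b]) @ [a] \<noteq> c # c # r"
  by (cases k) auto

lemma not_alt: assumes "4 \<le> n" "x+2 \<le> y" "y < n"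
  shows "\<not> alternate x y (wd n) \<and> \<not> alternate y x (wd n)"
proof -
  obtain m where m: "2*n = Suc m" using assms by (metis Suc_pred add_gr_0 mult_2 not_gr0 not_numeral_le_zero)
  have p: "proj {x, y} (wd n) = x # x # (y # y # concat (replicate m [x, x, y, y]))"
    using proj_far[OF assms] m by simp
  have p2: "proj {y, x} (wd n) = proj {x, y} (wd n)" by (simp add: insert_commute)
  have xy: "x \<noteq> y" using assms by simp
  show ?thesis
    unfolding alternate_def p2 p using not_alt_form[OF xy] not_alt_form[OF xy[symmetric]] by metis
qed

lemma gedges: assumes "4 \<le> n" shows "Gedges n (wd n) = {{v, v+1} | v. v+1 < n}"
proof
  show "Gedges n (wd n) \<subseteq> {{v, v+1} | v. v+1 < n}"
  proof
    fix e assume "e \<in> Gedges n (wd n)"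
    then obtain x y where e: "e = {x,y}" "x < n" "y < n" "x \<noteq> y" "alternate x y (wd n)"
      unfolding Gedges_def by blast
    consider "y = x+1" | "x = y+1" | "x+2 \<le> y" | "y+2 \<le> x" using e(4) by linarith
    then show "e \<in> {{v, v+1} | v. v+1 < n}"
    proof cases
      case 1 then show ?thesis using e by blast
    next
      case 2 then show ?thesis using e by (auto simp: insert_commute)
    next
      case 3 then show ?thesis using not_alt[OF assms 3 e(3)] e by blast
    next
      case 4 then show ?thesis using not_alt[OF assms 4 e(2)] e by blast
    qed
  qed
next
  show "{{v, v+1} | v. v+1 < n} \<subseteq> Gedges n (wd n)"
    unfolding Gedges_def using alt_adj[OF assms] by fastforce
qed

lemma wd_letter: "4 \<le> n \<Longrightarrow> v < n \<Longrightarrow> oa n v < 4*n^2 \<and> wd n ! (oa n v) = v"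
proof -
  assume n: "4 \<le> n" "v < n"
  have o: "oa n v < 2*n" using oab[OF n] by simp
  have "2*n \<le> 4*n^2" by (simp add: power2_eq_square)
  then have l: "oa n v < 4*n^2" using o by simp
  have "H n (oa n v) = g n (oa n v)" using Hat[of "oa n v" n 0 "oa n v"] o by simp
  then show ?thesis using l wd_nth g_oa[OF n] by simp
qed

lemma union_T: assumes n: "4 \<le> n"
  shows "(\<Union>t\<in>{1..numT (wd n)}. TEdges n (wd n) t) = Gedges n (wd n)"
proof
  show "(\<Union>t\<in>{1..numT (wd n)}. TEdges n (wd n) t) \<subseteq> Gedges n (wd n)"
    unfolding TEdges_def by blast
next
  show "Gedges n (wd n) \<subseteq> (\<Union>t\<in>{1..numT (wd n)}. TEdges n (wd n) t)"
  proof
    fix e assume e: "e \<in> Gedges n (wd n)"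
    then obtain v where v: "e = {v, v+1}" "v+1 < n" using gedges[OF n] by blast
    have l: "oa n v < length (wd n)" "wd n ! (oa n v) = v" using wd_letter[OF n, of v] v wd_len by auto
    obtain t where t: "1 \<le> t" "t \<le> numT (wd n)" "lo (wd n) t \<le> oa n v" "oa n v < hi (wd n) t"
      using pos_fac[OF l(1)] by blast
    have "v \<in> set (factor (wd n) t)" unfolding fac_mem[OF t(1,2)]
      by (rule exI[of _ "oa n v"]) (use t l in auto)
    then have "e \<in> TEdges n (wd n) t" unfolding TEdges_def using e v by blast
    then show "e \<in> (\<Union>t\<in>{1..numT (wd n)}. TEdges n (wd n) t)" using t by auto
  qed
qed

lemma tpg: assumes n: "4 \<le> n" shows "temporal_path_graph n (wd n)"
  unfolding temporal_path_graph_def union_T[OF n] gedges[OF n] is_path_graph_def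
proof (intro exI[of _ "[0..<n]"] conjI)
  show "{{v, v + 1} |v. v + 1 < n} = {{[0..<n] ! i, [0..<n] ! (i + 1)} |i. i + 1 < length [0..<n]}"
  proof (rule set_eqI)
    fix x
    show "x \<in> {{v, v + 1} |v. v + 1 < n} \<longleftrightarrow> x \<in> {{[0..<n] ! i, [0..<n] ! (i + 1)} |i. i + 1 < length [0..<n]}"
    proof
      assume "x \<in> {{v, v + 1} |v. v + 1 < n}"
      then obtain v where v: "x = {v, v+1}" "v+1 < n" by blast
      have "[0..<n] ! v = v" "[0..<n] ! (v+1) = v+1" using v by simp_all
      then show "x \<in> {{[0..<n] ! i, [0..<n] ! (i + 1)} |i. i + 1 < length [0..<n]}"
        using v by (intro CollectI exI[of _ v]) simp
    next
      assume "x \<in> {{[0..<n] ! i, [0..<n] ! (i + 1)} |i. i + 1 < length [0..<n]}"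
      then obtain v where v: "x = {[0..<n] ! v, [0..<n] ! (v + 1)}" "v+1 < n" by auto
      have "[0..<n] ! v = v" "[0..<n] ! (v+1) = v+1" using v by simp_all
      then show "x \<in> {{v, v + 1} |v. v + 1 < n}" using v by (intro CollectI exI[of _ v]) simp
    qed
  qed
qed auto

lemma ivt_up: "F a \<le> (v::nat) \<Longrightarrow> v < F b \<Longrightarrow> a < b \<Longrightarrow> \<exists>j. a \<le> j \<and> j < b \<and> F j \<le> v \<and> v < F (Suc j)"
proof (induction b)
  case 0 then show ?case by simp
next
  case (Suc b)
  show ?case
  proof (cases "F b \<le> v")
    case True then show ?thesis using Suc by (intro exI[of _ b]) auto
  next
    case False
    then have "a < b" using Suc.prems by (metis less_SucE)
    then show ?thesis using Suc False by (metis less_SucI not_le)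
  qed
qed

lemma ivt_down: "v < F a \<Longrightarrow> F b \<le> (v::nat) \<Longrightarrow> a < b \<Longrightarrow> \<exists>j. a \<le> j \<and> j < b \<and> v < F j \<and> F (Suc j) \<le> v"
proof (induction b)
  case 0 then show ?case by simp
next
  case (Suc b)
  show ?case
  proof (cases "v < F b")
    case True then show ?thesis using Suc by (intro exI[of _ b]) auto
  next
    case False
    then have "a < b" using Suc.prems by (metis less_SucE)
    then show ?thesis using Suc False by (metis less_SucI not_le)
  qed
qed

lemma mod8_close: "(v'::nat) \<le> v + 7 \<Longrightarrow> v \<le> v' + 7 \<Longrightarrow> v mod 8 = v' mod 8 \<Longrightarrow> v = v'"
proof -
  assume a: "v' \<le> v + 7" "v \<le> v' + 7" "v mod 8 = v' mod 8"
  have "v = 8 * (v div 8) + v mod 8" "v' = 8 * (v' div 8) + v' mod 8" by simp_all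
  moreover have "v div 8 = v' div 8"
  proof (rule ccontr)
    assume "v div 8 \<noteq> v' div 8"
    then consider "v div 8 + 1 \<le> v' div 8" | "v' div 8 + 1 \<le> v div 8" by linarith
    then show False
    proof cases
      case 1 then have "8 * (v div 8) + 8 \<le> 8 * (v' div 8)" by simp
      then show False using a \<open>v = _\<close> \<open>v' = _\<close> by linarith
    next
      case 2 then have "8 * (v' div 8) + 8 \<le> 8 * (v div 8)" by simp
      then show False using a \<open>v = _\<close> \<open>v' = _\<close> by linarith
    qed
  qed
  ultimately show ?thesis using a(3) by simp
qed

lemma lower: assumes n: "20 \<le> n" and tw: "temporal_walk n (wd n) vs ts" and sv: "set vs = {0..<n}"
  shows "n^2 \<le> 32 * last ts"
proof -
  define w where "w = wd n"
  define k where "k = length ts"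
  have n4: "4 \<le> n" using n by simp
  have tsne: "ts \<noteq> []" and lvs: "length vs = k+1" and srt: "sorted_wrt (<) ts"
    and stp: "\<And>i. i < k \<Longrightarrow> ts!i \<in> {1..numT w} \<and> {vs!i, vs!(i+1)} \<in> TEdges n w (ts!i)"
    using tw unfolding temporal_walk_def k_def w_def by auto
  have win: "win4 w" using wd_win[OF n4] w_def by simp
  have loc: "locp w" using wd_loc[OF n4] w_def by simp
  have lw: "length w = 4*n^2" using wd_len w_def by simp
  define e where "e i = min (vs!i) (vs!(i+1))" for i
  have eP: "{vs!i, vs!(i+1)} = {e i, e i + 1} \<and> e i + 1 < n" if i: "i < k" for i
  proof -
    have "{vs!i, vs!(i+1)} \<in> Gedges n w" using stp[OF i] unfolding TEdges_def by blast
    then obtain v where v: "{vs!i, vs!(i+1)} = {v, v+1}" "v+1 < n" using gedges[OF n4] w_def by blast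
    then have "(vs!i = v \<and> vs!(i+1) = v+1) \<or> (vs!i = v+1 \<and> vs!(i+1) = v)" by (simp add: doubleton_eq_iff)
    then have "e i = v" unfolding e_def by auto
    then show ?thesis using v by simp
  qed
  have eP2: "(vs!i = e i \<and> vs!(i+1) = e i + 1) \<or> (vs!i = e i + 1 \<and> vs!(i+1) = e i)" if i: "i < k" for i
    using eP[OF i] by (simp add: doubleton_eq_iff)
  have e_step: "e (i+1) \<le> e i + 1 \<and> e i \<le> e (i+1) + 1" if i: "i+1 < k" for i
    using eP2[of i] eP2[of "i+1"] i by auto
  have e_dist: "i + d < k \<Longrightarrow> e (i+d) \<le> e i + d \<and> e i \<le> e (i+d) + d" for i d
  proof (induction d)
    case 0 then show ?case by simp
  next
    case (Suc d) then show ?case using e_step[of "i+d"] by simp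
  qed
  have ts_dist: "i + d < k \<Longrightarrow> ts!i + d \<le> ts!(i+d)" for i d
  proof (induction d)
    case 0 then show ?case by simp
  next
    case (Suc d)
    have "ts!(i+d) < ts!(i + Suc d)" using sorted_wrt_nth_less[OF srt, of "i+d" "i + Suc d"] Suc.prems k_def by simp
    then show ?case using Suc by simp
  qed
  have "\<forall>i. \<exists>p. i < k \<longrightarrow> (lo w (ts!i) \<le> p \<and> p < hi w (ts!i) \<and> p < length w \<and> (w!p = e i \<or> w!p = e i + 1))"
  proof (intro allI)
    fix i
    show "\<exists>p. i < k \<longrightarrow> (lo w (ts!i) \<le> p \<and> p < hi w (ts!i) \<and> p < length w \<and> (w!p = e i \<or> w!p = e i + 1))"
    proof (cases "i < k")
      case True
      obtain a where a: "a \<in> {vs!i, vs!(i+1)}" "a \<in> set (factor w (ts!i))"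
        using stp[OF True] unfolding TEdges_def by blast
      have t: "1 \<le> ts!i" "ts!i \<le> numT w" using stp[OF True] by auto
      obtain p where p: "lo w (ts!i) \<le> p" "p < hi w (ts!i)" "p < length w" "w!p = a"
        using a(2) fac_mem[OF t] by blast
      have "a = e i \<or> a = e i + 1" using a(1) eP[OF True] by auto
      then show ?thesis using p by blast
    qed simp
  qed
  then obtain P where P: "\<And>i. i < k \<Longrightarrow> lo w (ts!i) \<le> P i \<and> P i < hi w (ts!i) \<and> P i < length w \<and> (w!(P i) = e i \<or> w!(P i) = e i + 1)"
    by metis
  have Ppos: "2 * e i \<le> P i mod (2*n) + 1 \<and> P i mod (2*n) \<le> 2 * e i + 4" if i: "i < k" for i
  proof -
    have "w!(P i) = H n (P i)" using P[OF i] lw wd_nth w_def by simp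
    then have "g n (P i mod (2*n)) = e i \<or> g n (P i mod (2*n)) = e i + 1" using P[OF i] unfolding H_def by simp
    then show ?thesis using posb[OF n4 _ _] eP[OF i] n by simp
  qed
  have pulse: "e i' \<le> e i + 7 \<and> e i \<le> e i' + 2" if ii: "i < i'" "i' < k" "P i div (2*n) = P i' div (2*n)" for i i'
  proof -
    have ik: "i < k" using ii by simp
    have t: "1 \<le> ts!i" "ts!i' \<le> numT w" using stp ik ii by auto
    have lt: "ts!i < ts!i'" using sorted_wrt_nth_less[OF srt ii(1)] ii k_def by simp
    have g: "hi w (ts!i) + 3*(ts!i' - ts!i - 1) \<le> lo w (ts!i')" using gap[OF win loc t(1) lt t(2)] .
    have p1: "P i < hi w (ts!i)" "lo w (ts!i') \<le> P i'" using P ik ii by auto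
    have td: "ts!i + (i'-i) \<le> ts!i'" using ts_dist[of i "i'-i"] ii by simp
    have ed: "e i' \<le> e i + (i'-i)" using e_dist[of i "i'-i"] ii by simp
    define r where "r = P i div (2*n)"
    have d1: "P i = 2*n*r + P i mod (2*n)" unfolding r_def by simp
    have d2: "P i' = 2*n*r + P i' mod (2*n)" unfolding r_def using ii(3) by simp
    have q1: "2 * e i \<le> P i mod (2*n) + 1 \<and> P i mod (2*n) \<le> 2 * e i + 4" using Ppos ik by simp
    have q2: "2 * e i' \<le> P i' mod (2*n) + 1 \<and> P i' mod (2*n) \<le> 2 * e i' + 4" using Ppos ii by simp
    show ?thesis using g p1 td ed d1 d2 q1 q2 lt by linarith
  qed
  have pulse2: "e i' \<le> e i + 7" if ii: "i < k" "i' < k" "P i div (2*n) = P i' div (2*n)" for i i'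
  proof -
    consider "i < i'" | "i = i'" | "i' < i" by linarith
    then show ?thesis
    proof cases
      case 1 then show ?thesis using pulse ii by blast
    next
      case 2 then show ?thesis by simp
    next
      case 3 then show ?thesis using pulse[OF 3 ii(1)] ii by simp
    qed
  qed
  have cover: "\<exists>i<k. e i = v" if v: "v+1 < n" for v
  proof -
    obtain a where a: "a < k+1" "vs!a = 0" using sv lvs n by (metis atLeastLessThan_iff in_set_conv_nth le0 zero_less_numeral order.strict_trans2)
    obtain b where b: "b < k+1" "vs!b = n-1" using sv lvs n by (metis atLeastLessThan_iff in_set_conv_nth le0 diff_less zero_less_one order.strict_trans2 zero_less_numeral)
    have ej: "e j = v" if j: "j < k" "(vs!j \<le> v \<and> v < vs!(j+1)) \<or> (v < vs!j \<and> vs!(j+1) \<le> v)" for j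
      using eP2[OF j(1)] j(2) by auto
    have vn: "v < n - 1" using v by simp
    consider "a < b" | "b < a" | "a = b" by linarith
    then show ?thesis
    proof cases
      case 1
      obtain j where j: "a \<le> j" "j < b" "vs!j \<le> v" "v < vs!(Suc j)"
        using ivt_up[of "\<lambda>j. vs!j" a v b] a b vn 1 by auto
      then show ?thesis using ej[of j] b by (intro exI[of _ j]) auto
    next
      case 2
      obtain j where j: "b \<le> j" "j < a" "v < vs!j" "vs!(Suc j) \<le> v"
        using ivt_down[of v "\<lambda>j. vs!j" b a] a b vn 2 by auto
      then show ?thesis using ej[of j] a by (intro exI[of _ j]) auto
    next
      case 3 then show ?thesis using a b n by simp
    qed
  qed
  then obtain I where I: "\<And>v. v+1 < n \<Longrightarrow> I v < k \<and> e (I v) = v" by metis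
  define R where "R v = P (I v) div (2*n)" for v
  define V where "V = {0..<n-1}"
  define Rm where "Rm = Max (R ` V)"
  have finV: "finite V" "V \<noteq> {}" using n V_def by auto
  have inj: "inj_on (\<lambda>v. (R v, v mod 8)) V"
  proof (rule inj_onI)
    fix v v' assume vv: "v \<in> V" "v' \<in> V" "(R v, v mod 8) = (R v', v' mod 8)"
    have iv: "I v < k" "e (I v) = v" "I v' < k" "e (I v') = v'" using I vv V_def by auto
    have "v' \<le> v + 7" "v \<le> v' + 7" using pulse2[of "I v" "I v'"] pulse2[of "I v'" "I v"] iv vv R_def by auto
    moreover have m8: "v mod 8 = v' mod 8" using vv(3) by simp
    ultimately show "v = v'"
      using mod8_close by blast
  qed
  have sub: "(\<lambda>v. (R v, v mod 8)) ` V \<subseteq> {0..Rm} \<times> {0..<8}"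
    using finV Rm_def by auto
  have "card V \<le> card ({0..Rm} \<times> {0..<(8::nat)})" using card_inj_on_le[OF inj sub] by simp
  then have c1: "n - 1 \<le> (Rm+1)*8" using V_def by (simp add: card_cartesian_product)
  have "Rm \<in> R ` V" unfolding Rm_def by (rule Max_in) (use finV in auto)
  then obtain v0 where v0: "v0 \<in> V" "R v0 = Rm" by auto
  define i0 where "i0 = I v0"
  have i0: "i0 < k" using I v0 V_def i0_def by auto
  have a1: "2*n*Rm \<le> P i0" using v0 R_def i0_def times_div_less_eq_dividend by metis
  have t0: "1 \<le> ts!i0" "ts!i0 \<le> numT w" using stp i0 by auto
  have a2: "P i0 < 4 * (ts!i0)" using P[OF i0] hi_le[OF win t0] by linarith
  have lst: "last ts = ts!(k-1)" using tsne k_def by (simp add: last_conv_nth)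
  have a3: "ts!i0 \<le> last ts" using ts_dist[of i0 "k-1-i0"] i0 lst by simp
  have b1: "n - 9 \<le> 8*Rm" using c1 by simp
  have b2: "n*(n-9) \<le> n*(8*Rm)" using b1 by (rule mult_le_mono2)
  have b0: "2*n*Rm < 4 * last ts" using a1 a2 a3 by linarith
  have e8: "n*(8*Rm) = 4*(2*n*Rm)" by (simp add: algebra_simps)
  have b3: "n*(8*Rm) < 16 * last ts" unfolding e8 using b0 by linarith
  have b4: "n*n \<le> n*(2*(n-9))" using n by (intro mult_le_mono2) simp
  have e2: "n*(2*(n-9)) = 2*(n*(n-9))" by (simp add: algebra_simps)
  have "n*n < 32 * last ts" using b2 b3 b4 e2 by linarith
  then show ?thesis by (simp add: power2_eq_square)
qed

theorem theorem17:
  shows "\<exists>c::real > 0. \<exists>n0::nat. \<forall>n \<ge> n0. \<exists>w :: nat list.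
            length w = 4 * n ^ 2 \<and> set w \<subseteq> {0..<n} \<and>
            temporal_path_graph n w \<and>
            (\<forall>vs ts. temporal_walk n w vs ts \<and> set vs = {0..<n} \<longrightarrow>
                real (last ts) \<ge> c * real n ^ 2)"
proof -
  have main: "\<exists>w :: nat list.
            length w = 4 * n ^ 2 \<and> set w \<subseteq> {0..<n} \<and>
            temporal_path_graph n w \<and>
            (\<forall>vs ts. temporal_walk n w vs ts \<and> set vs = {0..<n} \<longrightarrow>
                real (last ts) \<ge> (1/32) * real n ^ 2)" if n: "20 \<le> n" for n
  proof (intro exI[of _ "wd n"] conjI allI impI)
    have n4: "4 \<le> n" using n by simp
    show "length (wd n) = 4 * n ^ 2" by (rule wd_len)
    show "set (wd n) \<subseteq> {0..<n}" unfolding wd_def using H_lt[OF n4] by auto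
    show "temporal_path_graph n (wd n)" by (rule tpg[OF n4])
    fix vs ts assume a: "temporal_walk n (wd n) vs ts \<and> set vs = {0..<n}"
    have "n^2 \<le> 32 * last ts" using lower[OF n] a by blast
    then have "real (n^2) \<le> real (32 * last ts)" by (simp only: of_nat_le_iff)
    then show "real (last ts) \<ge> (1/32) * real n ^ 2" by simp
  qed
  show ?thesis by (intro exI[of _ "1/32::real"] conjI exI[of _ "20::nat"]) (use main in auto)
qed

end
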